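(* Let $1\le p\le q$. If $(p,q)$ does not satisfy $q=p\ge3$, then $\mathfrak{D}(K_{p,q})$ is unique: for every graph $G$ with no isolated vertices, $\mathfrak{D}(G)\cong\mathfrak{D}(K_{p,q})$ implies $G\cong K_{p,q}$. If $p=q\ge3$ and $G$ is a graph with no isolated vertices with $\mathfrak{D}(G)\cong\mathfrak{D}(K_{p,p})$, then $G\cong K_{p,p}$ or $G\cong K_p\,\Box\,K_2$ (and indeed $\mathfrak{D}(K_p\Box K_2)\cong\mathfrak{D}(K_{p,p})$).
   Context: All graphs are finite, simple, undirected. A set $S\subseteq V(G)$ is a dominating set if every vertex of $G$ is in $S$ or adjacent to a vertex of $S$. The domination TAR graph $\mathfrak{D}(G)$ has as vertices the dominating sets of $G$, with $S_1S_2$ an edge iff $|S_1\ominus S_2|=1$ (symmetric difference). $K_{p,q}$ is the complete bipartite graph with parts of sizes $p$ and $q$; $\Box$ is the Cartesian product. *)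

theory Defs
  imports Main
begin

definition simple_graph :: "'a set \<Rightarrow> 'a set set \<Rightarrow> bool" where
  "simple_graph V E \<longleftrightarrow> finite V \<and> (\<forall>e\<in>E. e \<subseteq> V \<and> card e = 2)"

definition no_isolated :: "'a set \<Rightarrow> 'a set set \<Rightarrow> bool" where
  "no_isolated V E \<longleftrightarrow> (\<forall>v\<in>V. \<exists>u. {u, v} \<in> E)"

definition graph_iso :: "'a set \<Rightarrow> 'a set set \<Rightarrow> 'b set \<Rightarrow> 'b set set \<Rightarrow> bool" where
  "graph_iso V1 E1 V2 E2 \<longleftrightarrow>
     (\<exists>f. bij_betw f V1 V2 \<and> (\<forall>u\<in>V1. \<forall>v\<in>V1. {u, v} \<in> E1 \<longleftrightarrow> {f u, f v} \<in> E2))"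

definition dominating :: "'a set \<Rightarrow> 'a set set \<Rightarrow> 'a set \<Rightarrow> bool" where
  "dominating V E S \<longleftrightarrow> S \<subseteq> V \<and> (\<forall>v\<in>V. v \<in> S \<or> (\<exists>u\<in>S. {u, v} \<in> E))"

definition tar_vertices :: "'a set \<Rightarrow> 'a set set \<Rightarrow> 'a set set" where
  "tar_vertices V E = {S. dominating V E S}"

definition tar_edges :: "'a set \<Rightarrow> 'a set set \<Rightarrow> 'a set set set" where
  "tar_edges V E = {{S1, S2} | S1 S2. dominating V E S1 \<and> dominating V E S2 \<and>
                        card ((S1 - S2) \<union> (S2 - S1)) = 1}"

definition Kbip_V :: "nat \<Rightarrow> nat \<Rightarrow> (bool \<times> nat) set" where
  "Kbip_V p q = {(False, i) | i. i < p} \<union> {(True, j) | j. j < q}"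

definition Kbip_E :: "nat \<Rightarrow> nat \<Rightarrow> (bool \<times> nat) set set" where
  "Kbip_E p q = {{(False, i), (True, j)} | i j. i < p \<and> j < q}"

definition Kprism_V :: "nat \<Rightarrow> (bool \<times> nat) set" where
  "Kprism_V p = {(b, i) | b i. i < p}"

definition Kprism_E :: "nat \<Rightarrow> (bool \<times> nat) set set" where
  "Kprism_E p = {{(b, i), (b, j)} | b i j. i < p \<and> j < p \<and> i \<noteq> j}
              \<union> {{(False, i), (True, i)} | i. i < p}"

end

theory Submission
  imports Defs
begin


definition part :: "bool \<Rightarrow> nat \<Rightarrow> (bool \<times> nat) set" where
  "part b n = {x. fst x = b \<and> snd x < n}"

lemma Kbip_V_part: "Kbip_V p q = part False p \<union> part True q"
  unfolding Kbip_V_def part_def by auto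

lemma Kprism_V_part: "Kprism_V p = part False p \<union> part True p"
  unfolding Kprism_V_def part_def 
  apply (rule set_eqI) subgoal for x by (cases x) auto done

lemma Kbip_E_iff:
  assumes "x \<in> Kbip_V p q" "y \<in> Kbip_V p q"
  shows "{x,y} \<in> Kbip_E p q \<longleftrightarrow> fst x \<noteq> fst y"
  using assms unfolding Kbip_E_def Kbip_V_def
  by (auto simp: doubleton_eq_iff)

lemma Kprism_E_iff:
  assumes "x \<in> Kprism_V p" "y \<in> Kprism_V p"
  shows "{x,y} \<in> Kprism_E p \<longleftrightarrow> x \<noteq> y \<and> (fst x = fst y \<or> snd x = snd y)"
proof
  assume "{x,y} \<in> Kprism_E p" thus "x \<noteq> y \<and> (fst x = fst y \<or> snd x = snd y)"
    unfolding Kprism_E_def by (auto simp: doubleton_eq_iff)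
next
  assume h: "x \<noteq> y \<and> (fst x = fst y \<or> snd x = snd y)"
  obtain b i where x: "x = (b,i)" "i < p" using assms(1) unfolding Kprism_V_def by auto
  obtain c j where y: "y = (c,j)" "j < p" using assms(2) unfolding Kprism_V_def by auto
  show "{x,y} \<in> Kprism_E p"
  proof (cases "b = c")
    case True thus ?thesis using h x y unfolding Kprism_E_def by auto
  next
    case False
    hence "i = j" using h x y by auto
    show ?thesis
    proof (cases b)
      case True
      hence "{x,y} = {(False, i), (True, i)}" using x y \<open>i = j\<close> False by auto
      thus ?thesis using x unfolding Kprism_E_def by blast
    next
      case F: False
      hence "{x,y} = {(False, i), (True, i)}" using x y \<open>i = j\<close> False by auto
      thus ?thesis using x unfolding Kprism_E_def by blast
    qed
  qed
qed

lemma Kbip_dom: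
  assumes "1 \<le> p" "1 \<le> q" "S \<subseteq> Kbip_V p q"
  shows "dominating (Kbip_V p q) (Kbip_E p q) S \<longleftrightarrow>
    (S \<inter> part False p \<noteq> {} \<and> S \<inter> part True q \<noteq> {}) \<or> S = part False p \<or> S = part True q"
proof
  assume d: "dominating (Kbip_V p q) (Kbip_E p q) S"
  show "(S \<inter> part False p \<noteq> {} \<and> S \<inter> part True q \<noteq> {}) \<or> S = part False p \<or> S = part True q"
  proof (rule ccontr)
    assume n: "\<not> ?thesis"
    show False
    proof (cases "S \<inter> part True q = {}")
      case True
      hence sub: "S \<subseteq> part False p" using assms(3) unfolding Kbip_V_part by auto
      have "part False p \<subseteq> S"
      proof
        fix v assume v: "v \<in> part False p"
        show "v \<in> S"
        proof (rule ccontr)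
          assume "v \<notin> S"
          then obtain u where "u \<in> S" "{u,v} \<in> Kbip_E p q" using d v unfolding dominating_def Kbip_V_part by auto
          hence "fst u \<noteq> fst v" using Kbip_E_iff[of u p q v] v sub unfolding Kbip_V_part by auto
          thus False using \<open>u \<in> S\<close> sub v unfolding part_def by auto
        qed
      qed
      thus False using sub n by auto
    next
      case False
      hence F: "S \<inter> part False p = {}" using n by auto
      hence sub: "S \<subseteq> part True q" using assms(3) unfolding Kbip_V_part by auto
      have "part True q \<subseteq> S"
      proof
        fix v assume v: "v \<in> part True q"
        show "v \<in> S"
        proof (rule ccontr)
          assume "v \<notin> S"
          then obtain u where "u \<in> S" "{u,v} \<in> Kbip_E p q" using d v unfolding dominating_def Kbip_V_part by auto
          hence "fst u \<noteq> fst v" using Kbip_E_iff[of u p q v] v sub unfolding Kbip_V_part by auto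
          thus False using \<open>u \<in> S\<close> sub v unfolding part_def by auto
        qed
      qed
      thus False using sub n by auto
    qed
  qed
next
  assume h: "(S \<inter> part False p \<noteq> {} \<and> S \<inter> part True q \<noteq> {}) \<or> S = part False p \<or> S = part True q"
  have "\<exists>u\<in>S. {u,v} \<in> Kbip_E p q" if v: "v \<in> Kbip_V p q" "v \<notin> S" for v
  proof -
    have "\<exists>u\<in>S. u \<in> Kbip_V p q \<and> fst u \<noteq> fst v"
    proof (cases "fst v")
      case True
      have "(False,0) \<in> part False p" using assms unfolding part_def by auto
      thus ?thesis using h True v assms(3) unfolding Kbip_V_part part_def by auto
    next
      case False
      have "(True,0) \<in> part True q" using assms unfolding part_def by auto
      thus ?thesis using h False v assms(3) unfolding Kbip_V_part part_def by auto
    qed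
    thus ?thesis using Kbip_E_iff v by blast
  qed
  thus "dominating (Kbip_V p q) (Kbip_E p q) S" using assms(3) unfolding dominating_def by blast
qed

lemma Kprism_dom:
  assumes "1 \<le> p" "S \<subseteq> Kprism_V p"
  shows "dominating (Kprism_V p) (Kprism_E p) S \<longleftrightarrow>
    (S \<inter> part False p \<noteq> {} \<and> S \<inter> part True p \<noteq> {}) \<or> S = part False p \<or> S = part True p"
proof
  assume d: "dominating (Kprism_V p) (Kprism_E p) S"
  show "(S \<inter> part False p \<noteq> {} \<and> S \<inter> part True p \<noteq> {}) \<or> S = part False p \<or> S = part True p"
  proof (rule ccontr)
    assume n: "\<not> ?thesis"
    have key: "part b p \<subseteq> S" if sub: "S \<subseteq> part b p" for b
    proof
      fix v assume v: "v \<in> part b p"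
      let ?y = "(\<not> b, snd v)"
      have yV: "?y \<in> Kprism_V p" "?y \<notin> S" using v sub unfolding Kprism_V_part part_def by auto
      then obtain u where "u \<in> S" "{u,?y} \<in> Kprism_E p" using d unfolding dominating_def by auto
      hence "u \<noteq> ?y \<and> (fst u = fst ?y \<or> snd u = snd ?y)" using Kprism_E_iff[of u p ?y] yV sub
        unfolding Kprism_V_part by auto
      hence "u = v" using \<open>u \<in> S\<close> sub v unfolding part_def by (cases u, cases v) auto
      thus "v \<in> S" using \<open>u \<in> S\<close> by simp
    qed
    show False
    proof (cases "S \<inter> part True p = {}")
      case True
      hence sub: "S \<subseteq> part False p" using assms(2) unfolding Kprism_V_part by auto
      thus False using key[OF sub] n by auto
    next
      case False
      hence F: "S \<inter> part False p = {}" using n by auto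
      hence sub: "S \<subseteq> part True p" using assms(2) unfolding Kprism_V_part by auto
      thus False using key[OF sub] n by auto
    qed
  qed
next
  assume h: "(S \<inter> part False p \<noteq> {} \<and> S \<inter> part True p \<noteq> {}) \<or> S = part False p \<or> S = part True p"
  have "\<exists>u\<in>S. {u,v} \<in> Kprism_E p" if v: "v \<in> Kprism_V p" "v \<notin> S" for v
  proof -
    have "\<exists>u\<in>S. u \<in> Kprism_V p \<and> u \<noteq> v \<and> (fst u = fst v \<or> snd u = snd v)"
    proof (cases "S = part False p \<or> S = part True p")
      case True
      hence "(\<not> fst v, snd v) \<in> S" using v unfolding Kprism_V_part part_def by auto
      moreover have "(\<not> fst v, snd v) \<noteq> v" by (cases v) auto
      ultimately show ?thesis using assms(2) by (intro bexI[of _ "(\<not> fst v, snd v)"]) auto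
    next
      case False
      hence "S \<inter> part (fst v) p \<noteq> {}" using h by (cases "fst v") auto
      then obtain u where "u \<in> S" "fst u = fst v" unfolding part_def by auto
      thus ?thesis using v assms(2) by auto
    qed
    thus ?thesis using Kprism_E_iff v by blast
  qed
  thus "dominating (Kprism_V p) (Kprism_E p) S" using assms(2) unfolding dominating_def by blast
qed

lemma prism_bip_dom:
  assumes "1 \<le> p"
  shows "dominating (Kprism_V p) (Kprism_E p) = dominating (Kbip_V p p) (Kbip_E p p)"
proof (rule ext)
  fix S
  have VV: "Kprism_V p = Kbip_V p p" using Kprism_V_part Kbip_V_part by simp
  show "dominating (Kprism_V p) (Kprism_E p) S = dominating (Kbip_V p p) (Kbip_E p p) S"
  proof (cases "S \<subseteq> Kprism_V p")
    case True thus ?thesis using Kprism_dom[OF assms True] Kbip_dom[OF assms assms, of S] VV by simp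
  next
    case False thus ?thesis using VV unfolding dominating_def by auto
  qed
qed

lemma second_part:
  assumes "1 \<le> p"
  shows "graph_iso (tar_vertices (Kprism_V p) (Kprism_E p)) (tar_edges (Kprism_V p) (Kprism_E p))
                      (tar_vertices (Kbip_V p p) (Kbip_E p p)) (tar_edges (Kbip_V p p) (Kbip_E p p))"
proof -
  have "tar_vertices (Kprism_V p) (Kprism_E p) = tar_vertices (Kbip_V p p) (Kbip_E p p)"
       "tar_edges (Kprism_V p) (Kprism_E p) = tar_edges (Kbip_V p p) (Kbip_E p p)"
    unfolding tar_vertices_def tar_edges_def prism_bip_dom[OF assms] by auto
  thus ?thesis unfolding graph_iso_def by (intro exI[of _ id]) auto
qed



definition sd :: "'a set \<Rightarrow> 'a set \<Rightarrow> 'a set" where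
  "sd X Y = (X - Y) \<union> (Y - X)"

lemma sd_comm: "sd X Y = sd Y X" unfolding sd_def by auto

lemma sd_single_iff: "sd X Y = {a} \<longleftrightarrow> (\<forall>x. (x \<in> Y) = ((x \<in> X) = (x \<noteq> a)))"
  unfolding sd_def by auto

lemma sd_insert: "v \<notin> S \<Longrightarrow> sd S (insert v S) = {v}"
  unfolding sd_def by auto

lemma sd_cancel: assumes "sd X Y = sd X Z" shows "Y = Z"
proof (rule set_eqI)
  fix x
  have "x \<in> sd X Y \<longleftrightarrow> x \<in> sd X Z" using assms by simp
  thus "x \<in> Y \<longleftrightarrow> x \<in> Z" unfolding sd_def by auto
qed

lemma sd_single_cases: assumes h: "sd X Y = {x}" shows
   "(x \<in> Y \<and> x \<notin> X \<and> Y = insert x X) \<or> (x \<in> X \<and> x \<notin> Y \<and> X = insert x Y)"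
proof -
  have hx: "\<And>y. (y \<in> Y) = ((y \<in> X) = (y \<noteq> x))" using h sd_single_iff by metis
  show ?thesis
  proof (cases "x \<in> X")
    case True
    have "x \<notin> Y" using hx True by simp
    moreover have "X = insert x Y" by (rule set_eqI) (use hx True in auto)
    ultimately show ?thesis using True by simp
  next
    case False
    have "x \<in> Y" using hx False by simp
    moreover have "Y = insert x X" by (rule set_eqI) (use hx False in auto)
    ultimately show ?thesis using False by simp
  qed
qed

lemma sd_square:
  assumes "sd X Y = {a}" "sd X Z = {b}" "sd Y W = {c}" "sd Z W = {d}" "Y \<noteq> Z" "X \<noteq> W"
  shows "a = d"
proof (rule ccontr)
  assume ad: "a \<noteq> d"
  have Y: "\<And>x. (x \<in> Y) = ((x \<in> X) = (x \<noteq> a))" using assms(1) sd_single_iff by metis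
  have Z: "\<And>x. (x \<in> Z) = ((x \<in> X) = (x \<noteq> b))" using assms(2) sd_single_iff by metis
  have W1: "\<And>x. (x \<in> W) = ((x \<in> Y) = (x \<noteq> c))" using assms(3) sd_single_iff by metis
  have W2: "\<And>x. (x \<in> W) = ((x \<in> Z) = (x \<noteq> d))" using assms(4) sd_single_iff by metis
  have ab: "a \<noteq> b"
  proof
    assume "a = b" hence "Y = Z" using Y Z by auto
    thus False using assms(5) by simp
  qed
  have ac: "a \<noteq> c"
  proof
    assume "a = c" hence "X = W" using Y W1 by auto
    thus False using assms(6) by simp
  qed
  have "(a \<in> W) = ((a \<in> X) = (a \<noteq> a) = (a \<noteq> c))" using Y W1 by metis
  moreover have "(a \<in> W) = ((a \<in> X) = (a \<noteq> b) = (a \<noteq> d))" using Z W2 by metis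
  ultimately show False using ab ac ad by auto
qed

lemma dom_subV: "dominating V E S \<Longrightarrow> S \<subseteq> V" unfolding dominating_def by auto

lemma dom_mono: "dominating V E S \<Longrightarrow> S \<subseteq> T \<Longrightarrow> T \<subseteq> V \<Longrightarrow> dominating V E T"
  unfolding dominating_def by blast

lemma edge_neq: "simple_graph V E \<Longrightarrow> {u,v} \<in> E \<Longrightarrow> u \<noteq> v"
  unfolding simple_graph_def by fastforce

lemma edge_in: "simple_graph V E \<Longrightarrow> {u,v} \<in> E \<Longrightarrow> u \<in> V \<and> v \<in> V"
  unfolding simple_graph_def by blast

lemma dom_minus: 
  assumes "simple_graph V E" "no_isolated V E" "v \<in> V"
  shows "dominating V E (V - {v})"
proof -
  obtain u where "{u,v} \<in> E" using assms unfolding no_isolated_def by auto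
  hence "u \<noteq> v" "u \<in> V" using edge_neq edge_in assms by metis+
  thus ?thesis unfolding dominating_def using \<open>{u,v} \<in> E\<close> by auto
qed

lemma dom_V: "dominating V E V" unfolding dominating_def by auto

lemma tar_edge_iff:
  assumes "dominating V E S" "dominating V E T"
  shows "{S,T} \<in> tar_edges V E \<longleftrightarrow> card (sd S T) = 1"
proof
  assume "{S,T} \<in> tar_edges V E"
  then obtain S1 S2 where "{S,T} = {S1,S2}" "card ((S1 - S2) \<union> (S2 - S1)) = 1"
    unfolding tar_edges_def by auto
  thus "card (sd S T) = 1" unfolding sd_def by (auto simp: doubleton_eq_iff Un_commute)
next
  assume "card (sd S T) = 1"
  thus "{S,T} \<in> tar_edges V E" using assms unfolding tar_edges_def sd_def by blast
qed

lemma partA: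
  assumes sg: "simple_graph V E" and ni: "no_isolated V E"
    and sg': "simple_graph V' E'" and ni': "no_isolated V' E'"
    and iso: "graph_iso (tar_vertices V E) (tar_edges V E) (tar_vertices V' E') (tar_edges V' E')"
  shows "\<exists>\<sigma>. bij_betw \<sigma> V V' \<and> (\<forall>S. S \<subseteq> V \<longrightarrow> (dominating V E S \<longleftrightarrow> dominating V' E' (\<sigma> ` S)))"
proof -
  let ?D = "dominating V E" and ?D' = "dominating V' E'"
  obtain \<phi> where bij: "bij_betw \<phi> (tar_vertices V E) (tar_vertices V' E')"
    and ed: "\<forall>S\<in>tar_vertices V E. \<forall>T\<in>tar_vertices V E.
        {S,T} \<in> tar_edges V E \<longleftrightarrow> {\<phi> S, \<phi> T} \<in> tar_edges V' E'"
    using iso unfolding graph_iso_def by blast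
  have finV: "finite V" using sg unfolding simple_graph_def by auto
  have mapD: "?D' (\<phi> S)" if "?D S" for S
    using bij that unfolding bij_betw_def tar_vertices_def by auto
  have injD: "S = T" if "?D S" "?D T" "\<phi> S = \<phi> T" for S T
    using bij that unfolding bij_betw_def inj_on_def tar_vertices_def by auto
  have surjD: "\<exists>S. ?D S \<and> \<phi> S = T" if "?D' T" for T
    using bij that unfolding bij_betw_def tar_vertices_def by (metis imageE mem_Collect_eq)
  have hphi: "card (sd S T) = 1 \<longleftrightarrow> card (sd (\<phi> S) (\<phi> T)) = 1" if "?D S" "?D T" for S T
    using ed that mapD[OF that(1)] mapD[OF that(2)] tar_edge_iff
    unfolding tar_vertices_def by (metis mem_Collect_eq)
  have one: "\<exists>a. sd (\<phi> S) (\<phi> T) = {a}" if "?D S" "?D T" "card (sd S T) = 1" for S T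
    using hphi[OF that(1,2)] that(3) by (metis card_1_singletonE)
  have Dmin: "?D (V - {v})" if "v \<in> V" for v using dom_minus[OF sg ni that] .
  define \<sigma> where "\<sigma> v = (THE w. sd (\<phi> V) (\<phi> (V - {v})) = {w})" for v
  have sig: "sd (\<phi> V) (\<phi> (V - {v})) = {\<sigma> v}" if vV: "v \<in> V" for v
  proof -
    have "sd V (V - {v}) = {v}" using vV unfolding sd_def by auto
    hence "card (sd V (V - {v})) = 1" by simp
    then obtain w where w: "sd (\<phi> V) (\<phi> (V - {v})) = {w}" using one[OF dom_V Dmin[OF vV]] by blast
    hence "\<sigma> v = w" unfolding \<sigma>_def by auto
    thus ?thesis using w by simp
  qed
  have K: "sd (\<phi> S) (\<phi> (insert v S)) = {\<sigma> v}" if "v \<in> V" "?D S" "v \<notin> S" for v S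
  proof -
    have "\<And>n S. card (V - S) = n \<Longrightarrow> ?D S \<Longrightarrow> v \<notin> S \<Longrightarrow> sd (\<phi> S) (\<phi> (insert v S)) = {\<sigma> v}"
    proof -
      fix n S
      show "card (V - S) = n \<Longrightarrow> ?D S \<Longrightarrow> v \<notin> S \<Longrightarrow> sd (\<phi> S) (\<phi> (insert v S)) = {\<sigma> v}"
      proof (induction n arbitrary: S rule: less_induct)
        case (less n S)
        have SV: "S \<subseteq> V" using less.prems(2) dom_subV by blast
        show ?case
        proof (cases "S = V - {v}")
          case True
          hence "insert v S = V" using \<open>v \<in> V\<close> by auto
          moreover have "sd (\<phi> (V - {v})) (\<phi> V) = {\<sigma> v}"
            using sig[OF \<open>v \<in> V\<close>] sd_comm[of "\<phi> V" "\<phi> (V - {v})"] by simp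
          ultimately show ?thesis using True by simp
        next
          case False
          then obtain w where w: "w \<in> V" "w \<notin> S" "w \<noteq> v" using SV less.prems(3) by blast
          have Dw: "?D (insert w S)" by (rule dom_mono[OF less.prems(2)]) (use w SV in auto)
          have Dv: "?D (insert v S)" by (rule dom_mono[OF less.prems(2)]) (use \<open>v \<in> V\<close> SV in auto)
          have Dwv: "?D (insert v (insert w S))" by (rule dom_mono[OF less.prems(2)]) (use \<open>v \<in> V\<close> w SV in auto)
          have lt: "card (V - insert w S) < n"
            proof -
              have "V - insert w S \<subset> V - S" using w by auto
              thus ?thesis using less.prems(1) finV psubset_card_mono by (metis finite_Diff)
            qed
          have IH: "sd (\<phi> (insert w S)) (\<phi> (insert v (insert w S))) = {\<sigma> v}"
            using less.IH[OF lt refl Dw] w less.prems(3) by simp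
          have c1: "card (sd S (insert v S)) = 1" using sd_insert[OF less.prems(3)] by simp
          obtain a where a: "sd (\<phi> S) (\<phi> (insert v S)) = {a}"
            using one[OF less.prems(2) Dv c1] by blast
          have c2: "card (sd S (insert w S)) = 1" using sd_insert[OF w(2)] by simp
          obtain b where b: "sd (\<phi> S) (\<phi> (insert w S)) = {b}"
            using one[OF less.prems(2) Dw c2] by blast
          have "sd (insert v S) (insert v (insert w S)) = {w}" using w unfolding sd_def by auto
          hence c3: "card (sd (insert v S) (insert v (insert w S))) = 1" by simp
          obtain c where c: "sd (\<phi> (insert v S)) (\<phi> (insert v (insert w S))) = {c}"
            using one[OF Dv Dwv c3] by blast
          have ne1: "\<phi> (insert v S) \<noteq> \<phi> (insert w S)"
          proof
            assume "\<phi> (insert v S) = \<phi> (insert w S)"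
            hence "insert v S = insert w S" using injD[OF Dv Dw] by simp
            thus False using w less.prems(3) by blast
          qed
          have ne2: "\<phi> S \<noteq> \<phi> (insert v (insert w S))"
          proof
            assume "\<phi> S = \<phi> (insert v (insert w S))"
            hence "S = insert v (insert w S)" using injD[OF less.prems(2) Dwv] by simp
            thus False using w less.prems(3) by blast
          qed
          have "a = \<sigma> v" using sd_square[OF a b c IH ne1 ne2] .
          thus ?thesis using a by simp
        qed
      qed
    qed
    thus ?thesis using that by blast
  qed
  have sigV: "\<sigma> v \<in> V'" if "v \<in> V" for v
  proof -
    have "\<sigma> v \<in> sd (\<phi> V) (\<phi> (V - {v}))" using sig[OF that] by simp
    moreover have "\<phi> V \<subseteq> V'" using dom_subV[OF mapD[OF dom_V]] .
    moreover have "\<phi> (V - {v}) \<subseteq> V'" using dom_subV[OF mapD[OF Dmin[OF that]]] .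
    ultimately show ?thesis unfolding sd_def by auto
  qed
  have sig_inj: "inj_on \<sigma> V"
  proof (rule inj_onI)
    fix v v' assume v: "v \<in> V" "v' \<in> V" "\<sigma> v = \<sigma> v'"
    have "\<phi> (V - {v}) = \<phi> (V - {v'})"
      using sig[OF v(1)] sig[OF v(2)] v(3) sd_cancel by metis
    hence "V - {v} = V - {v'}" using injD[OF Dmin[OF v(1)] Dmin[OF v(2)]] by simp
    thus "v = v'" using v by blast
  qed
  have sig_surj: "\<sigma> ` V = V'"
  proof
    show "\<sigma> ` V \<subseteq> V'" using sigV by auto
  next
    show "V' \<subseteq> \<sigma> ` V"
    proof
      fix w assume w: "w \<in> V'"
      obtain R0 where R0: "?D R0" "\<phi> R0 = V'" using surjD[OF dom_V] by blast
      obtain R1 where R1: "?D R1" "\<phi> R1 = V' - {w}" using surjD[OF dom_minus[OF sg' ni' w]] by blast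
      have "sd (\<phi> R1) (\<phi> R0) = {w}" using R0 R1 w unfolding sd_def by auto
      hence "card (sd R1 R0) = 1" using hphi[OF R1(1) R0(1)] by simp
      then obtain x where x: "sd R1 R0 = {x}" by (metis card_1_singletonE)
      have xV: "x \<in> V" using x dom_subV[OF R0(1)] dom_subV[OF R1(1)] unfolding sd_def by blast
      show "w \<in> \<sigma> ` V"
      proof (cases "x \<in> R0")
        case True
        hence "x \<notin> R1" "R0 = insert x R1" using sd_single_cases[OF x] by auto
        hence "sd (\<phi> R1) (\<phi> R0) = {\<sigma> x}" using K[OF xV R1(1)] by simp
        thus ?thesis using \<open>sd (\<phi> R1) (\<phi> R0) = {w}\<close> xV by auto
      next
        case False
        hence "x \<in> R1" "R1 = insert x R0" using sd_single_cases[OF x] by auto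
        hence "sd (\<phi> R0) (\<phi> R1) = {\<sigma> x}" using K[OF xV R0(1)] False by simp
        hence "sd (\<phi> R1) (\<phi> R0) = {\<sigma> x}" by (simp only: sd_comm)
        thus ?thesis using \<open>sd (\<phi> R1) (\<phi> R0) = {w}\<close> xV by auto
      qed
    qed
  qed
  have Q: "\<forall>u\<in>V. (\<sigma> u \<in> \<phi> S) = ((u \<in> S) = (\<sigma> u \<in> \<phi> V))" if "?D S" for S
  proof -
    have "\<And>n S. card (V - S) = n \<Longrightarrow> ?D S \<Longrightarrow> \<forall>u\<in>V. (\<sigma> u \<in> \<phi> S) = ((u \<in> S) = (\<sigma> u \<in> \<phi> V))"
    proof -
      fix n S
      show "card (V - S) = n \<Longrightarrow> ?D S \<Longrightarrow> \<forall>u\<in>V. (\<sigma> u \<in> \<phi> S) = ((u \<in> S) = (\<sigma> u \<in> \<phi> V))"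
      proof (induction n arbitrary: S rule: less_induct)
        case (less n S)
        have SV: "S \<subseteq> V" using less.prems(2) dom_subV by blast
        show ?case
        proof (cases "S = V")
          case True thus ?thesis by simp
        next
          case False
          then obtain w where w: "w \<in> V" "w \<notin> S" using SV by blast
          have Dw: "?D (insert w S)" by (rule dom_mono[OF less.prems(2)]) (use w SV in auto)
          have lt: "card (V - insert w S) < n"
            proof -
              have "V - insert w S \<subset> V - S" using w by auto
              thus ?thesis using less.prems(1) finV psubset_card_mono by (metis finite_Diff)
            qed
          have IH: "\<forall>u\<in>V. (\<sigma> u \<in> \<phi> (insert w S)) = ((u \<in> insert w S) = (\<sigma> u \<in> \<phi> V))"
            using less.IH[OF lt refl Dw] .
          have Kw: "\<forall>x. (x \<in> \<phi> (insert w S)) = ((x \<in> \<phi> S) = (x \<noteq> \<sigma> w))"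
            using K[OF w(1) less.prems(2) w(2)] sd_single_iff by metis
          show ?thesis
          proof
            fix u assume u: "u \<in> V"
            show "(\<sigma> u \<in> \<phi> S) = ((u \<in> S) = (\<sigma> u \<in> \<phi> V))"
            proof (cases "u = w")
              case True thus ?thesis using IH Kw w u by auto
            next
              case False
              hence "\<sigma> u \<noteq> \<sigma> w" using sig_inj u w(1) inj_on_def by metis
              thus ?thesis using IH Kw w u False by auto
            qed
          qed
        qed
      qed
    qed
    thus ?thesis using that by blast
  qed
  have orient: "\<sigma> c \<in> \<phi> V" if c: "c \<in> V" for c
  proof (rule ccontr)
    assume nc: "\<sigma> c \<notin> \<phi> V"
    define S0 where "S0 = V - {u. {u,c} \<in> E}"
    have "{c,c} \<notin> E" using edge_neq[OF sg, of c c] by blast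
    hence cS0: "c \<in> S0" using c unfolding S0_def by auto
    have DS0: "?D S0" unfolding dominating_def
    proof (intro conjI ballI)
      show "S0 \<subseteq> V" unfolding S0_def by blast
    next
      fix v assume v: "v \<in> V"
      show "v \<in> S0 \<or> (\<exists>u\<in>S0. {u, v} \<in> E)"
      proof (cases "v \<in> S0")
        case False
        hence "{v,c} \<in> E" using v unfolding S0_def by blast
        hence "{c,v} \<in> E" by (simp add: insert_commute)
        thus ?thesis using cS0 by blast
      qed simp
    qed
    have nD: "\<not> ?D (S0 - {c})"
    proof
      assume "?D (S0 - {c})"
      hence "c \<in> S0 - {c} \<or> (\<exists>u\<in>S0 - {c}. {u, c} \<in> E)" using c unfolding dominating_def by blast
      thus False unfolding S0_def by blast
    qed
    have "(\<sigma> c \<in> \<phi> S0) = ((c \<in> S0) = (\<sigma> c \<in> \<phi> V))" using Q[OF DS0] c by blast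
    hence nS0: "\<sigma> c \<notin> \<phi> S0" using cS0 nc by simp
    define X where "X = insert (\<sigma> c) (\<phi> S0)"
    have DX: "?D' X" unfolding X_def
      by (rule dom_mono[OF mapD[OF DS0]]) (use sigV[OF c] dom_subV[OF mapD[OF DS0]] in auto)
    obtain R where R: "?D R" "\<phi> R = X" using surjD[OF DX] by blast
    have "sd (\<phi> S0) (\<phi> R) = {\<sigma> c}" using R(2) sd_insert[OF nS0] unfolding X_def by simp
    hence "card (sd (\<phi> S0) (\<phi> R)) = 1" by simp
    hence "card (sd S0 R) = 1" using hphi[OF DS0 R(1)] by simp
    then obtain x where x: "sd S0 R = {x}" by (metis card_1_singletonE)
    have xR: "\<forall>y. (y \<in> R) = ((y \<in> S0) = (y \<noteq> x))" using x sd_single_iff by metis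
    have "x \<in> sd S0 R" using x by simp
    hence xV: "x \<in> V" using dom_subV[OF DS0] dom_subV[OF R(1)] unfolding sd_def by blast
    have q1: "(\<sigma> x \<in> \<phi> R) = ((x \<in> R) = (\<sigma> x \<in> \<phi> V))" using Q[OF R(1)] xV by blast
    have q2: "(\<sigma> x \<in> \<phi> S0) = ((x \<in> S0) = (\<sigma> x \<in> \<phi> V))" using Q[OF DS0] xV by blast
    have xx: "(x \<in> R) = (\<not> x \<in> S0)" using xR by simp
    have "(\<sigma> x \<in> \<phi> R) \<noteq> (\<sigma> x \<in> \<phi> S0)"
      by (cases "x \<in> S0"; cases "\<sigma> x \<in> \<phi> V") (use q1 q2 xx in simp_all)
    hence "\<sigma> x = \<sigma> c" using R(2) unfolding X_def by auto
    hence "x = c" using inj_onD[OF sig_inj _ xV c] by simp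
    have "R = S0 - {c}"
    proof (rule set_eqI)
      fix y show "(y \<in> R) = (y \<in> S0 - {c})" using xR \<open>x = c\<close> cS0 by (cases "y = c") auto
    qed
    thus False using R(1) nD by simp
  qed
  have phiS: "\<phi> S = \<sigma> ` S" if "?D S" for S
  proof
    show "\<phi> S \<subseteq> \<sigma> ` S"
    proof
      fix y assume y: "y \<in> \<phi> S"
      hence "y \<in> V'" using dom_subV[OF mapD[OF that]] by blast
      then obtain u where u: "u \<in> V" "y = \<sigma> u" using sig_surj by blast
      thus "y \<in> \<sigma> ` S" using Q[OF that] orient y by auto
    qed
  next
    show "\<sigma> ` S \<subseteq> \<phi> S" using Q[OF that] orient dom_subV[OF that] by auto
  qed
  have "\<forall>S. S \<subseteq> V \<longrightarrow> (?D S \<longleftrightarrow> ?D' (\<sigma> ` S))"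
  proof (intro allI impI iffI)
    fix S assume "S \<subseteq> V" "?D S"
    thus "?D' (\<sigma> ` S)" using phiS mapD by metis
  next
    fix S assume S: "S \<subseteq> V" "?D' (\<sigma> ` S)"
    then obtain R where R: "?D R" "\<phi> R = \<sigma> ` S" using surjD by blast
    hence "\<sigma> ` R = \<sigma> ` S" using phiS by metis
    hence "R = S" using inj_on_image_eq_iff[OF sig_inj dom_subV[OF R(1)] S(1)] by simp
    thus "?D S" using R by simp
  qed
  thus ?thesis using sig_inj sig_surj unfolding bij_betw_def by blast
qed



lemma side:
  assumes sg: "simple_graph V E"
    and AB: "A \<union> B = V" "A \<inter> B = {}" "A \<noteq> {}" "B \<noteq> {}"
    and dc: "\<And>S. S \<subseteq> V \<Longrightarrow> dominating V E S \<longleftrightarrow> ((S \<inter> A \<noteq> {} \<and> S \<inter> B \<noteq> {}) \<or> S = A \<or> S = B)"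
  shows "(\<forall>a\<in>A. \<forall>b\<in>B. {a,b}\<in>E) \<longrightarrow> (\<forall>u\<in>A. \<forall>v\<in>A. {u,v}\<notin>E)"
    and "(\<exists>a\<in>A. \<exists>b\<in>B. {a,b}\<notin>E) \<longrightarrow> (\<forall>u\<in>A. \<forall>v\<in>A. {u,v}\<in>E \<longleftrightarrow> u \<noteq> v) \<and> 2 \<le> card A
           \<and> (\<forall>x\<in>A. \<exists>b\<in>B. \<forall>a\<in>A. {a,b}\<in>E \<longleftrightarrow> a = x)"
proof -
  have fin: "finite V" using sg unfolding simple_graph_def by simp
  have sym: "\<And>u v. {u,v} = {v,u}" by (rule insert_commute)
  have ne: "\<And>u v. {u,v}\<in>E \<Longrightarrow> u \<noteq> v" using edge_neq[OF sg] by blast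
  have E1: "w = a \<or> w = b \<or> {a,w}\<in>E \<or> {b,w}\<in>E" if h: "a\<in>A" "b\<in>B" "w\<in>V" for a b w
  proof -
    have "{a,b} \<subseteq> V" using h AB(1) by blast
    moreover have "{a,b} \<inter> A \<noteq> {}" "{a,b} \<inter> B \<noteq> {}" using h by auto
    ultimately have "dominating V E {a,b}" using dc[of "{a,b}"] by simp
    hence "w \<in> {a,b} \<or> (\<exists>u\<in>{a,b}. {u,w}\<in>E)" using h(3) unfolding dominating_def by blast
    thus ?thesis by simp
  qed
  have E2: "\<exists>u\<in>A. {u,w}\<in>E" if h: "w \<in> B" for w
  proof -
    have "A \<subseteq> V" using AB(1) by blast
    hence "dominating V E A" using dc[of A] by simp
    moreover have "w \<in> V" "w \<notin> A" using h AB(1,2) by auto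
    ultimately show ?thesis unfolding dominating_def by blast
  qed
  have E3: "\<exists>w\<in>V. w \<notin> A - {x} \<and> (\<forall>u\<in>A-{x}. {u,w}\<notin>E)" if h: "x \<in> A" for x
  proof -
    have sub: "A - {x} \<subseteq> V" using AB(1) by blast
    have n1: "(A - {x}) \<inter> B = {}" using AB(2) by blast
    have n2: "A - {x} \<noteq> A" using h by blast
    have n3: "A - {x} \<noteq> B"
    proof
      assume "A - {x} = B" hence "B \<subseteq> A" by blast
      thus False using AB(2,4) by blast
    qed
    have "\<not> dominating V E (A - {x})" using dc[OF sub] n1 n2 n3 by simp
    thus ?thesis using sub unfolding dominating_def by blast
  qed
  have LA: "{a',u}\<in>E" if h: "u\<in>A" "b\<in>B" "{u,b}\<notin>E" "a'\<in>A" "a'\<noteq>u" for u b a'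
  proof -
    have "u \<in> V" using h AB(1) by blast
    have "u \<noteq> b" using h AB(2) by blast
    moreover have "{b,u} \<notin> E" using h(3) sym by metis
    ultimately show ?thesis using E1[OF h(4) h(2) \<open>u \<in> V\<close>] h(5) by auto
  qed
  show "(\<forall>a\<in>A. \<forall>b\<in>B. {a,b}\<in>E) \<longrightarrow> (\<forall>u\<in>A. \<forall>v\<in>A. {u,v}\<notin>E)"
  proof (intro impI ballI notI)
    fix u v assume cross: "\<forall>a\<in>A. \<forall>b\<in>B. {a,b}\<in>E" and uv: "u \<in> A" "v \<in> A" "{u,v} \<in> E"
    have "u \<noteq> v" using ne uv(3) by blast
    obtain w where w: "w \<in> V" "w \<notin> A - {u}" "\<forall>y\<in>A-{u}. {y,w}\<notin>E" using E3[OF uv(1)] by blast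
    have vA: "v \<in> A - {u}" using uv \<open>u \<noteq> v\<close> by blast
    hence nvw: "{v,w} \<notin> E" using w(3) by blast
    show False
    proof (cases "w \<in> A")
      case True
      hence "w = u" using w(2) by blast
      thus False using nvw uv(3) sym by metis
    next
      case False
      hence "w \<in> B" using w(1) AB(1) by blast
      thus False using cross uv(2) nvw by blast
    qed
  qed
  show "(\<exists>a\<in>A. \<exists>b\<in>B. {a,b}\<notin>E) \<longrightarrow> (\<forall>u\<in>A. \<forall>v\<in>A. {u,v}\<in>E \<longleftrightarrow> u \<noteq> v) \<and> 2 \<le> card A
           \<and> (\<forall>x\<in>A. \<exists>b\<in>B. \<forall>a\<in>A. {a,b}\<in>E \<longleftrightarrow> a = x)"
  proof
    assume "\<exists>a\<in>A. \<exists>b\<in>B. {a,b}\<notin>E"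
    then obtain a0 b0 where ab0: "a0 \<in> A" "b0 \<in> B" "{a0,b0} \<notin> E" by blast
    have clique: "{u,v}\<in>E \<longleftrightarrow> u \<noteq> v" if uv: "u\<in>A" "v\<in>A" for u v
    proof
      assume "{u,v}\<in>E" thus "u \<noteq> v" using ne by blast
    next
      assume uv': "u \<noteq> v"
      show "{u,v}\<in>E"
      proof (cases "v = a0")
        case True thus ?thesis using LA[OF ab0 uv(1)] uv' by simp
      next
        case va0: False
        show ?thesis
        proof (cases "u = a0")
          case True
          hence "{v,u}\<in>E" using LA[OF ab0 uv(2)] va0 by simp
          thus ?thesis using sym by metis
        next
          case ua0: False
          obtain w where w: "w \<in> V" "w \<notin> A - {v}" "\<forall>y\<in>A-{v}. {y,w}\<notin>E" using E3[OF uv(2)] by blast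
          have "a0 \<in> A - {v}" using ab0(1) va0 by blast
          hence na0: "{a0,w} \<notin> E" using w(3) by blast
          have wB: "w \<in> B"
          proof (rule ccontr)
            assume "w \<notin> B"
            hence "w \<in> A" using w(1) AB(1) by blast
            hence "w = v" using w(2) by blast
            moreover have "{v,a0} \<in> E" using LA[OF ab0 uv(2)] va0 by simp
            ultimately show False using na0 sym by metis
          qed
          have "u \<in> A - {v}" using uv(1) uv' by blast
          hence "{u,w} \<notin> E" using w(3) by blast
          hence "{v,u} \<in> E" using LA[OF uv(1) wB _ uv(2)] uv' by simp
          thus ?thesis using sym by metis
        qed
      qed
    qed
    have finA: "finite A" using fin AB(1) finite_subset by blast
    obtain a1 where a1: "a1 \<in> A" "a1 \<noteq> a0"
    proof (rule ccontr)
      assume "\<not> thesis"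
      hence "\<forall>a\<in>A. a = a0" using that by blast
      moreover obtain u where "u \<in> A" "{u,b0}\<in>E" using E2[OF ab0(2)] by blast
      ultimately show False using ab0(3) by simp
    qed
    have c2: "2 \<le> card A"
    proof -
      have "{a0,a1} \<subseteq> A" using a1 ab0(1) by blast
      hence "card {a0,a1} \<le> card A" using finA card_mono by blast
      thus ?thesis using a1(2) by simp
    qed
    have match: "\<exists>b\<in>B. \<forall>a\<in>A. {a,b}\<in>E \<longleftrightarrow> a = x" if x: "x \<in> A" for x
    proof -
      obtain a2 where a2: "a2 \<in> A" "a2 \<noteq> x" using a1 ab0(1) by metis
      obtain w where w: "w \<in> V" "w \<notin> A - {x}" "\<forall>y\<in>A-{x}. {y,w}\<notin>E" using E3[OF x] by blast
      have wB: "w \<in> B"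
      proof (rule ccontr)
        assume "w \<notin> B"
        hence "w \<in> A" using w(1) AB(1) by blast
        hence "w = x" using w(2) by blast
        moreover have "{a2,x} \<in> E" using clique[OF a2(1) x] a2(2) by simp
        moreover have "a2 \<in> A - {x}" using a2 by blast
        ultimately show False using w(3) by blast
      qed
      obtain u where u: "u \<in> A" "{u,w}\<in>E" using E2[OF wB] by blast
      have "u = x" using u w(3) by blast
      have "\<forall>a\<in>A. {a,w}\<in>E \<longleftrightarrow> a = x"
      proof
        fix a assume aA: "a \<in> A"
        show "{a,w}\<in>E \<longleftrightarrow> a = x"
        proof
          assume "{a,w}\<in>E" thus "a = x" using w(3) aA by blast
        next
          assume "a = x" thus "{a,w}\<in>E" using u \<open>u = x\<close> by simp
        qed
      qed
      thus ?thesis using wB by blast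
    qed
    show "(\<forall>u\<in>A. \<forall>v\<in>A. {u,v}\<in>E \<longleftrightarrow> u \<noteq> v) \<and> 2 \<le> card A
           \<and> (\<forall>x\<in>A. \<exists>b\<in>B. \<forall>a\<in>A. {a,b}\<in>E \<longleftrightarrow> a = x)"
      using clique c2 match by blast
  qed
qed

lemma partB:
  assumes sg: "simple_graph V E"
    and AB: "A \<union> B = V" "A \<inter> B = {}" "A \<noteq> {}" "B \<noteq> {}"
    and dc: "\<And>S. S \<subseteq> V \<Longrightarrow> dominating V E S \<longleftrightarrow> ((S \<inter> A \<noteq> {} \<and> S \<inter> B \<noteq> {}) \<or> S = A \<or> S = B)"
  shows "(\<forall>u\<in>V. \<forall>v\<in>V. {u,v} \<in> E \<longleftrightarrow> (u \<in> A \<and> v \<in> B \<or> u \<in> B \<and> v \<in> A))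
       \<or> (card A = card B \<and> 2 \<le> card A \<and> (\<forall>u\<in>A. \<forall>v\<in>A. {u,v}\<in>E \<longleftrightarrow> u \<noteq> v)
          \<and> (\<forall>u\<in>B. \<forall>v\<in>B. {u,v}\<in>E \<longleftrightarrow> u \<noteq> v)
          \<and> (\<forall>v\<in>B. \<exists>!u. u\<in>A \<and> {u,v}\<in>E) \<and> (\<forall>u\<in>A. \<exists>!v. v\<in>B \<and> {u,v}\<in>E))"
proof -
  have sym: "\<And>u v. {u,v} = {v,u}" by (rule insert_commute)
  have fin: "finite V" using sg unfolding simple_graph_def by simp
  have AB': "B \<union> A = V" "B \<inter> A = {}" "B \<noteq> {}" "A \<noteq> {}" using AB by auto
  have dc': "dominating V E S \<longleftrightarrow> ((S \<inter> B \<noteq> {} \<and> S \<inter> A \<noteq> {}) \<or> S = B \<or> S = A)" if "S \<subseteq> V" for S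
    using dc[OF that] by auto
  note sA = side[OF sg AB dc] and sB = side[OF sg AB' dc']
  show ?thesis
  proof (cases "\<forall>a\<in>A. \<forall>b\<in>B. {a,b}\<in>E")
    case True
    have True': "\<forall>b\<in>B. \<forall>a\<in>A. {b,a}\<in>E" using True sym by metis
    have nA: "\<forall>u\<in>A. \<forall>v\<in>A. {u,v}\<notin>E" using sA(1) True by blast
    have nB: "\<forall>u\<in>B. \<forall>v\<in>B. {u,v}\<notin>E" using sB(1) True' by blast
    have "\<forall>u\<in>V. \<forall>v\<in>V. {u,v} \<in> E \<longleftrightarrow> (u \<in> A \<and> v \<in> B \<or> u \<in> B \<and> v \<in> A)"
    proof (intro ballI iffI)
      fix u v assume uv: "u \<in> V" "v \<in> V" "{u,v}\<in>E"
      show "u \<in> A \<and> v \<in> B \<or> u \<in> B \<and> v \<in> A"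
      proof (cases "u \<in> A")
        case True
        hence "v \<notin> A" using nA uv(3) by blast
        thus ?thesis using True uv(2) AB(1) by blast
      next
        case False
        hence "u \<in> B" using uv(1) AB(1) by blast
        hence "v \<notin> B" using nB uv(3) by blast
        thus ?thesis using \<open>u \<in> B\<close> uv(2) AB(1) by blast
      qed
    next
      fix u v assume "u \<in> V" "v \<in> V" "u \<in> A \<and> v \<in> B \<or> u \<in> B \<and> v \<in> A"
      thus "{u,v}\<in>E" using True True' by blast
    qed
    thus ?thesis by blast
  next
    case False
    hence ex: "\<exists>a\<in>A. \<exists>b\<in>B. {a,b}\<notin>E" by blast
    then obtain a0 b0 where "a0\<in>A" "b0\<in>B" "{a0,b0}\<notin>E" by blast
    hence ex': "\<exists>b\<in>B. \<exists>a\<in>A. {b,a}\<notin>E" using sym by metis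
    have cA: "\<forall>u\<in>A. \<forall>v\<in>A. {u,v}\<in>E \<longleftrightarrow> u \<noteq> v" and c2: "2 \<le> card A"
      and mA: "\<forall>x\<in>A. \<exists>b\<in>B. \<forall>a\<in>A. {a,b}\<in>E \<longleftrightarrow> a = x" using sA(2) ex by blast+
    have cB: "\<forall>u\<in>B. \<forall>v\<in>B. {u,v}\<in>E \<longleftrightarrow> u \<noteq> v"
      and mB: "\<forall>x\<in>B. \<exists>a\<in>A. \<forall>b\<in>B. {b,a}\<in>E \<longleftrightarrow> b = x" using sB(2) ex' by blast+
    have finA: "finite A" and finB: "finite B" using fin AB(1) finite_subset by blast+
    define h where "h x = (SOME b. b \<in> B \<and> (\<forall>a\<in>A. {a,b}\<in>E \<longleftrightarrow> a = x))" for x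
    have hp: "h x \<in> B \<and> (\<forall>a\<in>A. {a,h x}\<in>E \<longleftrightarrow> a = x)" if "x \<in> A" for x
      unfolding h_def by (rule someI_ex) (use mA that in blast)
    define g where "g x = (SOME a. a \<in> A \<and> (\<forall>b\<in>B. {b,a}\<in>E \<longleftrightarrow> b = x))" for x
    have gp: "g x \<in> A \<and> (\<forall>b\<in>B. {b,g x}\<in>E \<longleftrightarrow> b = x)" if "x \<in> B" for x
      unfolding g_def by (rule someI_ex) (use mB that in blast)
    have hinj: "inj_on h A"
    proof (rule inj_onI)
      fix x y assume xy: "x \<in> A" "y \<in> A" "h x = h y"
      have "{x, h x} \<in> E" using hp[OF xy(1)] xy(1) by blast
      hence "{x, h y} \<in> E" using xy(3) by simp
      thus "x = y" using hp[OF xy(2)] xy(1) by blast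
    qed
    have ginj: "inj_on g B"
    proof (rule inj_onI)
      fix x y assume xy: "x \<in> B" "y \<in> B" "g x = g y"
      have "{x, g x} \<in> E" using gp[OF xy(1)] xy(1) by blast
      hence "{x, g y} \<in> E" using xy(3) by simp
      thus "x = y" using gp[OF xy(2)] xy(1) by blast
    qed
    have hAB: "h ` A \<subseteq> B" using hp by blast
    have gBA: "g ` B \<subseteq> A" using gp by blast
    have le1: "card A \<le> card B" using card_inj_on_le[OF hinj hAB finB] .
    have le2: "card B \<le> card A" using card_inj_on_le[OF ginj gBA finA] .
    have hsurj: "h ` A = B"
      using card_seteq[OF finB hAB] card_image[OF hinj] le1 le2 by simp
    have gsurj: "g ` B = A"
      using card_seteq[OF finA gBA] card_image[OF ginj] le1 le2 by simp
    have u1: "\<exists>!u. u\<in>A \<and> {u,v}\<in>E" if v: "v \<in> B" for v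
    proof -
      obtain x where x: "x \<in> A" "v = h x" using hsurj v by blast
      show ?thesis
      proof (rule ex1I[of _ x])
        show "x \<in> A \<and> {x,v}\<in>E" using hp[OF x(1)] x by blast
      next
        fix u assume "u \<in> A \<and> {u,v}\<in>E" thus "u = x" using hp[OF x(1)] x by blast
      qed
    qed
    have u2: "\<exists>!v. v\<in>B \<and> {u,v}\<in>E" if u: "u \<in> A" for u
    proof -
      obtain y where y: "y \<in> B" "u = g y" using gsurj u by blast
      show ?thesis
      proof (rule ex1I[of _ y])
        have "{y,u}\<in>E" using gp[OF y(1)] y by blast
        thus "y \<in> B \<and> {u,y}\<in>E" using y(1) sym by metis
      next
        fix v assume v: "v \<in> B \<and> {u,v}\<in>E"
        hence "{v,u}\<in>E" using sym by metis
        thus "v = y" using gp[OF y(1)] y v by blast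
      qed
    qed
    show ?thesis using le1 le2 c2 cA cB u1 u2 by simp
  qed
qed



lemma part_card: "card (part b n) = n"
proof -
  have "part b n = (\<lambda>i. (b,i)) ` {..<n}" unfolding part_def by (auto simp: image_iff)
  moreover have "inj (\<lambda>i::nat. (b,i))" by (rule injI) simp
  ultimately show ?thesis by (simp add: card_image inj_on_def)
qed

lemma Kbip_sg: "simple_graph (Kbip_V p q) (Kbip_E p q)"
  unfolding simple_graph_def
proof
  have "Kbip_V p q \<subseteq> UNIV \<times> {..<max p q}" unfolding Kbip_V_def by auto
  moreover have "finite (UNIV \<times> {..<max p q} :: (bool \<times> nat) set)" by simp
  ultimately show "finite (Kbip_V p q)" using finite_subset by blast
next
  show "\<forall>e\<in>Kbip_E p q. e \<subseteq> Kbip_V p q \<and> card e = 2"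
    unfolding Kbip_E_def Kbip_V_def by auto
qed

lemma Kbip_ni: assumes "1 \<le> p" "1 \<le> q" shows "no_isolated (Kbip_V p q) (Kbip_E p q)"
  unfolding no_isolated_def
proof
  fix v assume v: "v \<in> Kbip_V p q"
  show "\<exists>u. {u, v} \<in> Kbip_E p q"
  proof (cases "fst v")
    case True
    have "(False,0) \<in> Kbip_V p q" using assms unfolding Kbip_V_def by auto
    moreover have "fst (False,0) \<noteq> fst v" using True by simp
    ultimately show ?thesis using Kbip_E_iff[OF _ v] by blast
  next
    case False
    have "(True,0) \<in> Kbip_V p q" using assms unfolding Kbip_V_def by auto
    moreover have "fst (True,0) \<noteq> fst v" using False by simp
    ultimately show ?thesis using Kbip_E_iff[OF _ v] by blast
  qed
qed

lemma graph_iso_trans: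
  assumes "graph_iso V1 E1 V2 E2" "graph_iso V2 E2 V3 E3"
  shows "graph_iso V1 E1 V3 E3"
proof -
  obtain f where f: "bij_betw f V1 V2" "\<forall>u\<in>V1. \<forall>v\<in>V1. {u, v} \<in> E1 \<longleftrightarrow> {f u, f v} \<in> E2"
    using assms(1) unfolding graph_iso_def by blast
  obtain g where g: "bij_betw g V2 V3" "\<forall>u\<in>V2. \<forall>v\<in>V2. {u, v} \<in> E2 \<longleftrightarrow> {g u, g v} \<in> E3"
    using assms(2) unfolding graph_iso_def by blast
  have "bij_betw (g \<circ> f) V1 V3" using bij_betw_trans f(1) g(1) by blast
  moreover have "\<forall>u\<in>V1. \<forall>v\<in>V1. {u, v} \<in> E1 \<longleftrightarrow> {(g \<circ> f) u, (g \<circ> f) v} \<in> E3"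
  proof (intro ballI)
    fix u v assume "u \<in> V1" "v \<in> V1"
    moreover hence "f u \<in> V2" "f v \<in> V2" using f(1) bij_betw_apply by metis+
    ultimately show "{u, v} \<in> E1 \<longleftrightarrow> {(g \<circ> f) u, (g \<circ> f) v} \<in> E3" using f(2) g(2) by simp
  qed
  ultimately show ?thesis unfolding graph_iso_def by blast
qed

lemma prism_iso:
  assumes AB: "A \<union> B = V" "A \<inter> B = {}"
    and \<alpha>: "bij_betw \<alpha> A {..<p}" and m: "bij_betw m B A"
    and cA: "\<forall>u\<in>A. \<forall>v\<in>A. {u,v}\<in>E \<longleftrightarrow> u \<noteq> v"
    and cB: "\<forall>u\<in>B. \<forall>v\<in>B. {u,v}\<in>E \<longleftrightarrow> u \<noteq> v"
    and cr: "\<forall>u\<in>A. \<forall>v\<in>B. {u,v}\<in>E \<longleftrightarrow> u = m v"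
  shows "graph_iso V E (Kprism_V p) (Kprism_E p)"
proof -
  define f where "f v = (if v \<in> A then (False, \<alpha> v) else (True, \<alpha> (m v)))" for v
  have ai: "inj_on \<alpha> A" and aim: "\<alpha> ` A = {..<p}" using \<alpha> unfolding bij_betw_def by auto
  have mi: "inj_on m B" and mim: "m ` B = A" using m unfolding bij_betw_def by auto
  have mA: "m v \<in> A" if "v \<in> B" for v using mim that by blast
  have fV: "f v \<in> Kprism_V p" if "v \<in> V" for v
  proof (cases "v \<in> A")
    case True
    hence "\<alpha> v < p" using aim by blast
    thus ?thesis using True unfolding f_def Kprism_V_def by auto
  next
    case False
    hence "v \<in> B" using that AB(1) by blast
    hence "\<alpha> (m v) < p" using aim mA by blast
    thus ?thesis using False unfolding f_def Kprism_V_def by auto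
  qed
  have inj: "inj_on f V"
  proof (rule inj_onI)
    fix u v assume uv: "u \<in> V" "v \<in> V" "f u = f v"
    show "u = v"
    proof (cases "u \<in> A")
      case True
      hence "v \<in> A" using uv(3) unfolding f_def by (auto split: if_splits)
      hence "\<alpha> u = \<alpha> v" using True uv(3) unfolding f_def by simp
      thus ?thesis using ai True \<open>v \<in> A\<close> inj_on_def by metis
    next
      case False
      hence "v \<notin> A" using uv(3) unfolding f_def by (auto split: if_splits)
      hence "\<alpha> (m u) = \<alpha> (m v)" using False uv(3) unfolding f_def by simp
      moreover have "u \<in> B" "v \<in> B" using False \<open>v \<notin> A\<close> uv(1,2) AB(1) by blast+
      ultimately have "m u = m v" using ai mA inj_on_def by metis
      thus ?thesis using mi \<open>u \<in> B\<close> \<open>v \<in> B\<close> inj_on_def by metis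
    qed
  qed
  have img: "f ` V = Kprism_V p"
  proof
    show "f ` V \<subseteq> Kprism_V p" using fV by blast
  next
    show "Kprism_V p \<subseteq> f ` V"
    proof
      fix x assume "x \<in> Kprism_V p"
      then obtain b i where x: "x = (b,i)" "i < p" unfolding Kprism_V_def by blast
      obtain a where a: "a \<in> A" "\<alpha> a = i" using aim x(2) by (metis imageE lessThan_iff)
      show "x \<in> f ` V"
      proof (cases b)
        case False
        have "f a = x" using a x False unfolding f_def by simp
        moreover have "a \<in> V" using a AB(1) by blast
        ultimately show ?thesis by blast
      next
        case True
        obtain v where v: "v \<in> B" "m v = a" using mim a(1) by blast
        have "v \<notin> A" using v(1) AB(2) by blast
        hence "f v = x" using a x True v unfolding f_def by simp
        moreover have "v \<in> V" using v AB(1) by blast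
        ultimately show ?thesis by blast
      qed
    qed
  qed
  have edges: "{u,v} \<in> E \<longleftrightarrow> {f u, f v} \<in> Kprism_E p" if uv: "u \<in> V" "v \<in> V" for u v
  proof -
    have P: "{f u, f v} \<in> Kprism_E p \<longleftrightarrow> f u \<noteq> f v \<and> (fst (f u) = fst (f v) \<or> snd (f u) = snd (f v))"
      using Kprism_E_iff fV uv by blast
    have aeq: "\<alpha> x = \<alpha> y \<longleftrightarrow> x = y" if "x \<in> A" "y \<in> A" for x y using ai that inj_on_def by metis
    have meq: "m x = m y \<longleftrightarrow> x = y" if "x \<in> B" "y \<in> B" for x y using mi that inj_on_def by metis
    show ?thesis
    proof (cases "u \<in> A")
      case uA: True
      show ?thesis
      proof (cases "v \<in> A")
        case True thus ?thesis using uA P cA aeq unfolding f_def by auto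
      next
        case False
        hence vB: "v \<in> B" using uv AB(1) by blast
        have "{u,v}\<in>E \<longleftrightarrow> u = m v" using cr uA vB by blast
        also have "\<dots> \<longleftrightarrow> \<alpha> u = \<alpha> (m v)" using aeq uA mA[OF vB] by blast
        finally show ?thesis using uA False P unfolding f_def by auto
      qed
    next
      case uA: False
      hence uB: "u \<in> B" using uv AB(1) by blast
      show ?thesis
      proof (cases "v \<in> A")
        case True
        have "{u,v} = {v,u}" by (rule insert_commute)
        hence "{u,v}\<in>E \<longleftrightarrow> v = m u" using cr uB True by auto
        also have "\<dots> \<longleftrightarrow> \<alpha> v = \<alpha> (m u)" using aeq True mA[OF uB] by blast
        finally show ?thesis using uA True P unfolding f_def by auto
      next
        case False
        hence vB: "v \<in> B" using uv AB(1) by blast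
        have "{u,v}\<in>E \<longleftrightarrow> u \<noteq> v" using cB uB vB by blast
        also have "\<dots> \<longleftrightarrow> \<alpha> (m u) \<noteq> \<alpha> (m v)" using aeq meq mA uB vB by metis
        finally show ?thesis using uA False P unfolding f_def by auto
      qed
    qed
  qed
  show ?thesis unfolding graph_iso_def bij_betw_def using inj img edges by blast
qed

lemma c4_iso: "graph_iso (Kprism_V 2) (Kprism_E 2) (Kbip_V 2 2) (Kbip_E 2 2)"
proof -
  have V4: "Kprism_V 2 = {(False,0),(False,1),(True,0),(True,1)}"
    unfolding Kprism_V_def by (auto simp: less_2_cases_iff)
  have V4': "Kbip_V 2 2 = {(False,0),(False,1),(True,0),(True,1)}"
    unfolding Kbip_V_def by (auto simp: less_2_cases_iff)
  define g :: "bool \<times> nat \<Rightarrow> bool \<times> nat" where "g x = (fst x \<noteq> (snd x = 1), if fst x then 1 else 0)" for x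
  have gv: "g (False,0) = (False,0)" "g (False,1) = (True,0)" "g (True,0) = (True,1)" "g (True,1) = (False,1)"
    unfolding g_def by auto
  have bij: "bij_betw g (Kprism_V 2) (Kbip_V 2 2)"
    unfolding bij_betw_def V4 V4' inj_on_def by (auto simp: g_def)
  have "\<forall>u\<in>Kprism_V 2. \<forall>v\<in>Kprism_V 2. {u, v} \<in> Kprism_E 2 \<longleftrightarrow> {g u, g v} \<in> Kbip_E 2 2"
  proof (intro ballI)
    fix u v assume uv: "u \<in> Kprism_V 2" "v \<in> Kprism_V 2"
    have "g u \<in> Kbip_V 2 2" "g v \<in> Kbip_V 2 2" using uv bij bij_betw_apply by metis+
    hence "{g u, g v} \<in> Kbip_E 2 2 \<longleftrightarrow> fst (g u) \<noteq> fst (g v)" using Kbip_E_iff by blast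
    moreover have "{u, v} \<in> Kprism_E 2 \<longleftrightarrow> u \<noteq> v \<and> (fst u = fst v \<or> snd u = snd v)" using Kprism_E_iff uv by blast
    moreover have "(u \<noteq> v \<and> (fst u = fst v \<or> snd u = snd v)) \<longleftrightarrow> fst (g u) \<noteq> fst (g v)"
      using uv unfolding V4 by (auto simp: g_def)
    ultimately show "{u, v} \<in> Kprism_E 2 \<longleftrightarrow> {g u, g v} \<in> Kbip_E 2 2" by simp
  qed
  thus ?thesis using bij unfolding graph_iso_def by blast
qed



lemma main_first:
  fixes p q :: nat
  assumes p1: "1 \<le> p" and pq: "p \<le> q"
    and sg: "simple_graph V E" and ni: "no_isolated V E"
    and iso: "graph_iso (tar_vertices V E) (tar_edges V E)
                      (tar_vertices (Kbip_V p q) (Kbip_E p q)) (tar_edges (Kbip_V p q) (Kbip_E p q))"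
  shows "graph_iso V E (Kbip_V p q) (Kbip_E p q) \<or>
         (p = q \<and> 2 \<le> p \<and> graph_iso V E (Kprism_V p) (Kprism_E p))"
proof -
  have q1: "1 \<le> q" using p1 pq by simp
  let ?V' = "Kbip_V p q"
  obtain \<sigma> where bij: "bij_betw \<sigma> V ?V'"
    and dc0: "\<forall>S. S \<subseteq> V \<longrightarrow> (dominating V E S \<longleftrightarrow> dominating ?V' (Kbip_E p q) (\<sigma> ` S))"
    using partA[OF sg ni Kbip_sg Kbip_ni[OF p1 q1] iso] by blast
  have si: "inj_on \<sigma> V" and sim: "\<sigma> ` V = ?V'" using bij unfolding bij_betw_def by auto
  define P0 where "P0 = part False p"
  define P1 where "P1 = part True q"
  have V'P: "?V' = P0 \<union> P1" unfolding P0_def P1_def by (rule Kbip_V_part)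
  define A where "A = {v \<in> V. \<sigma> v \<in> P0}"
  define B where "B = {v \<in> V. \<sigma> v \<in> P1}"
  have inA: "v \<in> A \<longleftrightarrow> \<not> fst (\<sigma> v)" if "v \<in> V" for v
    using that sim V'P unfolding A_def P0_def P1_def part_def by auto
  have inB: "v \<in> B \<longleftrightarrow> fst (\<sigma> v)" if "v \<in> V" for v
    using that sim V'P unfolding B_def P0_def P1_def part_def by auto
  have AV: "A \<subseteq> V" and BV: "B \<subseteq> V" unfolding A_def B_def by auto
  have imA: "\<sigma> ` A = P0"
  proof
    show "\<sigma> ` A \<subseteq> P0" unfolding A_def by auto
  next
    show "P0 \<subseteq> \<sigma> ` A"
    proof
      fix y assume "y \<in> P0"
      moreover hence "y \<in> \<sigma> ` V" using sim V'P by blast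
      ultimately show "y \<in> \<sigma> ` A" unfolding A_def by auto
    qed
  qed
  have imB: "\<sigma> ` B = P1"
  proof
    show "\<sigma> ` B \<subseteq> P1" unfolding B_def by auto
  next
    show "P1 \<subseteq> \<sigma> ` B"
    proof
      fix y assume "y \<in> P1"
      moreover hence "y \<in> \<sigma> ` V" using sim V'P by blast
      ultimately show "y \<in> \<sigma> ` B" unfolding B_def by auto
    qed
  qed
  have AB1: "A \<union> B = V" using inA inB AV BV by blast
  have AB2: "A \<inter> B = {}" using inA inB AV by blast
  have P0ne: "(False,0) \<in> P0" and P1ne: "(True,0) \<in> P1" using p1 q1 unfolding P0_def P1_def part_def by auto
  have AB3: "A \<noteq> {}" using imA P0ne by auto
  have AB4: "B \<noteq> {}" using imB P1ne by auto
  have dc: "dominating V E S \<longleftrightarrow> ((S \<inter> A \<noteq> {} \<and> S \<inter> B \<noteq> {}) \<or> S = A \<or> S = B)" if S: "S \<subseteq> V" for S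
  proof -
    have sub: "\<sigma> ` S \<subseteq> ?V'" using S sim by blast
    have "dominating V E S \<longleftrightarrow> dominating ?V' (Kbip_E p q) (\<sigma> ` S)" using dc0 S by blast
    also have "\<dots> \<longleftrightarrow> (\<sigma> ` S \<inter> P0 \<noteq> {} \<and> \<sigma> ` S \<inter> P1 \<noteq> {}) \<or> \<sigma> ` S = P0 \<or> \<sigma> ` S = P1"
      using Kbip_dom[OF p1 q1 sub] unfolding P0_def P1_def .
    also have "\<sigma> ` S \<inter> P0 \<noteq> {} \<longleftrightarrow> S \<inter> A \<noteq> {}" using S unfolding A_def by blast
    also have "\<sigma> ` S \<inter> P1 \<noteq> {} \<longleftrightarrow> S \<inter> B \<noteq> {}" using S unfolding B_def by blast
    also have "\<sigma> ` S = P0 \<longleftrightarrow> S = A" using inj_on_image_eq_iff[OF si S AV] imA by simp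
    also have "\<sigma> ` S = P1 \<longleftrightarrow> S = B" using inj_on_image_eq_iff[OF si S BV] imB by simp
    finally show ?thesis .
  qed
  have sV: "\<sigma> v \<in> ?V'" if "v \<in> V" for v using sim that by blast
  from partB[OF sg AB1 AB2 AB3 AB4 dc] show ?thesis
  proof
    assume cr: "\<forall>u\<in>V. \<forall>v\<in>V. {u,v} \<in> E \<longleftrightarrow> (u \<in> A \<and> v \<in> B \<or> u \<in> B \<and> v \<in> A)"
    have "\<forall>u\<in>V. \<forall>v\<in>V. {u,v} \<in> E \<longleftrightarrow> {\<sigma> u, \<sigma> v} \<in> Kbip_E p q"
    proof (intro ballI)
      fix u v assume uv: "u \<in> V" "v \<in> V"
      have "{\<sigma> u, \<sigma> v} \<in> Kbip_E p q \<longleftrightarrow> fst (\<sigma> u) \<noteq> fst (\<sigma> v)" using Kbip_E_iff sV uv by blast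
      moreover have "{u,v} \<in> E \<longleftrightarrow> (u \<in> A \<and> v \<in> B \<or> u \<in> B \<and> v \<in> A)" using cr uv by blast
      ultimately show "{u,v} \<in> E \<longleftrightarrow> {\<sigma> u, \<sigma> v} \<in> Kbip_E p q" using inA inB uv by auto
    qed
    thus ?thesis using bij unfolding graph_iso_def by blast
  next
    assume h: "card A = card B \<and> 2 \<le> card A \<and> (\<forall>u\<in>A. \<forall>v\<in>A. {u,v}\<in>E \<longleftrightarrow> u \<noteq> v)
          \<and> (\<forall>u\<in>B. \<forall>v\<in>B. {u,v}\<in>E \<longleftrightarrow> u \<noteq> v)
          \<and> (\<forall>v\<in>B. \<exists>!u. u\<in>A \<and> {u,v}\<in>E) \<and> (\<forall>u\<in>A. \<exists>!v. v\<in>B \<and> {u,v}\<in>E)"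
    have hc: "card A = card B" and h2: "2 \<le> card A" and hA: "\<forall>u\<in>A. \<forall>v\<in>A. {u,v}\<in>E \<longleftrightarrow> u \<noteq> v"
      and hB: "\<forall>u\<in>B. \<forall>v\<in>B. {u,v}\<in>E \<longleftrightarrow> u \<noteq> v" and hm1: "\<forall>v\<in>B. \<exists>!u. u\<in>A \<and> {u,v}\<in>E"
      and hm2: "\<forall>u\<in>A. \<exists>!v. v\<in>B \<and> {u,v}\<in>E" using h by blast+
    have "card A = card P0" using card_image[OF inj_on_subset[OF si AV]] imA by simp
    hence cA: "card A = p" unfolding P0_def part_card .
    have "card B = card P1" using card_image[OF inj_on_subset[OF si BV]] imB by simp
    hence cB: "card B = q" unfolding P1_def part_card .
    have peq: "p = q" and p2: "2 \<le> p" using hc h2 cA cB by simp_all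
    define \<alpha> where "\<alpha> v = snd (\<sigma> v)" for v
    have abij: "bij_betw \<alpha> A {..<p}"
      unfolding bij_betw_def
    proof
      show "inj_on \<alpha> A"
      proof (rule inj_onI)
        fix x y assume xy: "x \<in> A" "y \<in> A" "\<alpha> x = \<alpha> y"
        have "\<not> fst (\<sigma> x)" "\<not> fst (\<sigma> y)" using inA[of x] inA[of y] xy(1,2) AV by auto
        hence "fst (\<sigma> x) = fst (\<sigma> y)" by simp
        hence "\<sigma> x = \<sigma> y" using xy(3) unfolding \<alpha>_def by (simp add: prod_eq_iff)
        thus "x = y" using inj_onD[OF si _ ] xy(1,2) AV by blast
      qed
    next
      have "\<alpha> ` A = snd ` (\<sigma> ` A)" unfolding \<alpha>_def by (simp add: image_image)
      also have "\<dots> = {..<p}" unfolding imA P0_def part_def by (auto simp: image_iff)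
      finally show "\<alpha> ` A = {..<p}" .
    qed
    define m where "m v = (THE u. u \<in> A \<and> {u,v}\<in>E)" for v
    have mp: "m v \<in> A \<and> {m v, v} \<in> E" if "v \<in> B" for v
      unfolding m_def using theI'[of "\<lambda>u. u \<in> A \<and> {u,v}\<in>E"] hm1 that by blast
    have mu: "u = m v" if "v \<in> B" "u \<in> A" "{u,v}\<in>E" for u v
      using hm1 that mp[OF that(1)] by blast
    have mbij: "bij_betw m B A"
      unfolding bij_betw_def
    proof
      show "inj_on m B"
      proof (rule inj_onI)
        fix x y assume xy: "x \<in> B" "y \<in> B" "m x = m y"
        have "m x \<in> A" "{m x, x} \<in> E" "{m x, y} \<in> E" using mp[OF xy(1)] mp[OF xy(2)] xy(3) by auto
        thus "x = y" using hm2 xy(1,2) by blast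
      qed
    next
      show "m ` B = A"
      proof
        show "m ` B \<subseteq> A" using mp by blast
      next
        show "A \<subseteq> m ` B"
        proof
          fix u assume u: "u \<in> A"
          then obtain v where v: "v \<in> B" "{u,v}\<in>E" using hm2 by blast
          thus "u \<in> m ` B" using mu[OF v(1) u v(2)] by blast
        qed
      qed
    qed
    have cr: "\<forall>u\<in>A. \<forall>v\<in>B. {u,v}\<in>E \<longleftrightarrow> u = m v"
      using mu mp by blast
    have "graph_iso V E (Kprism_V p) (Kprism_E p)"
      using prism_iso[OF AB1 AB2 abij mbij hA hB cr] .
    thus ?thesis using peq p2 by blast
  qed
qed

theorem proposition3p3:
  fixes p q :: nat
  assumes "1 \<le> p" and "p \<le> q"
  shows "(\<forall>(V :: 'a set) (E :: 'a set set).
            simple_graph V E \<and> no_isolated V E \<and>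
            graph_iso (tar_vertices V E) (tar_edges V E)
                      (tar_vertices (Kbip_V p q) (Kbip_E p q)) (tar_edges (Kbip_V p q) (Kbip_E p q))
          \<longrightarrow> (if q = p \<and> p \<ge> 3
               then graph_iso V E (Kbip_V p q) (Kbip_E p q) \<or> graph_iso V E (Kprism_V p) (Kprism_E p)
               else graph_iso V E (Kbip_V p q) (Kbip_E p q)))
       \<and> (q = p \<and> p \<ge> 3 \<longrightarrow>
            graph_iso (tar_vertices (Kprism_V p) (Kprism_E p)) (tar_edges (Kprism_V p) (Kprism_E p))
                      (tar_vertices (Kbip_V p p) (Kbip_E p p)) (tar_edges (Kbip_V p p) (Kbip_E p p)))"
proof (intro conjI allI impI)
  fix V :: "'a set" and E
  assume h: "simple_graph V E \<and> no_isolated V E \<and>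
            graph_iso (tar_vertices V E) (tar_edges V E)
                      (tar_vertices (Kbip_V p q) (Kbip_E p q)) (tar_edges (Kbip_V p q) (Kbip_E p q))"
  have r: "graph_iso V E (Kbip_V p q) (Kbip_E p q) \<or>
         (p = q \<and> 2 \<le> p \<and> graph_iso V E (Kprism_V p) (Kprism_E p))"
    using main_first[OF assms] h by blast
  show "if q = p \<and> p \<ge> 3
               then graph_iso V E (Kbip_V p q) (Kbip_E p q) \<or> graph_iso V E (Kprism_V p) (Kprism_E p)
               else graph_iso V E (Kbip_V p q) (Kbip_E p q)"
  proof (cases "q = p \<and> p \<ge> 3")
    case True thus ?thesis using r by auto
  next
    case False
    show ?thesis
    proof (cases "graph_iso V E (Kbip_V p q) (Kbip_E p q)")
      case True thus ?thesis unfolding if_not_P[OF False] .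
    next
      case nb: False
      hence pp: "p = q" "2 \<le> p" and gi: "graph_iso V E (Kprism_V p) (Kprism_E p)" using r by auto
      hence "p = 2" "q = 2" using False by auto
      hence "graph_iso V E (Kbip_V p q) (Kbip_E p q)" using graph_iso_trans[OF gi] c4_iso by simp
      thus ?thesis unfolding if_not_P[OF False] .
    qed
  qed
next
  assume "q = p \<and> 3 \<le> p"
  thus "graph_iso (tar_vertices (Kprism_V p) (Kprism_E p)) (tar_edges (Kprism_V p) (Kprism_E p))
                      (tar_vertices (Kbip_V p p) (Kbip_E p p)) (tar_edges (Kbip_V p p) (Kbip_E p p))"
    using second_part by simp
qed


end
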